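(* Consider a discounted constrained MDP with discount factor $\gamma\in(0,1)$ and a nonnegative cost, and a sequence of policy iterates $\{\pi_{\theta_k}\}_{k\ge 0}$ produced by a policy-update scheme with update interval $\Delta t>0$, together with Lagrange multipliers $\{\lambda_k\}_{k\ge0}$. Assume: (i) $\lambda_k\in[0,\lambda_{\max}]$ for all $k$; (ii) for each $k$, the cost estimate $\widehat J_c(\pi_{\theta_k})$ is the empirical mean of the discounted trajectory cost return $C(\tau)=\sum_{t=0}^\infty\gamma^t c_t$ over $N$ i.i.d. trajectories $\tau$ generated by $\pi_{\theta_k}$; (iii) there is $B_c<\infty$ with $0\le C(\tau)\le B_c$ almost surely; the updates satisfy the trust-region constraint $D_{\mathrm{KL}}(\pi_{\theta_k}\,\|\,\pi_{\theta_{k+1}})\le\delta$ for all $k$; and the population cost drift satisfies $|J_c(\pi_{\theta_{k+1}})-J_c(\pi_{\theta_k})|\le D_{\mathrm{TR}}:=\frac{2B_c}{1-\gamma}\sqrt{2\delta}$ for all $k$, where $J_c(\pi)=\mathbb E_\pi[C(\tau)]$. Fix a horizon $K$ and a confidence level $\eta\in(0,1)$, and for $k\ge1$ define $$\widehat f_k:=\frac{\widehat J_c(\pi_{\theta_{k+1}})-2\widehat J_c(\pi_{\theta_k})+\widehat J_c(\pi_{\theta_{k-1}})}{\Delta t^2}+\lambda_k .$$ Then, with probability at least $1-\eta$, $$\max_{1\le k\le K-1}\frac{|\widehat f_{k+1}-\widehat f_k|}{\Delta t}\le\frac{4}{\Delta t^3}\big(D_{\mathrm{TR}}+2\varepsilon_N\big)+\frac{2\lambda_{\max}}{\Delta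 t},\qquad \varepsilon_N:=B_c\sqrt{\frac{\log(2K/\eta)}{2N}}.$$
   Context: $J_c(\pi)$ denotes the (population) expected discounted cost return of policy $\pi$, and $c_t$ is the cost incurred at time step $t$ of a trajectory. $D_{\mathrm{KL}}$ denotes the Kullback–Leibler divergence between the policies (the trust-region constraint of TRPO, or the KL control implicitly induced by PPO clipping). *)

theory Defs
  imports "HOL-Probability.Probability"
begin

definition disc_return :: "real \<Rightarrow> ('t \<Rightarrow> nat \<Rightarrow> real) \<Rightarrow> 't \<Rightarrow> real" where
  "disc_return \<gamma> cost \<tau> = (\<Sum>t. \<gamma> ^ t * cost \<tau> t)"

text \<open>Population expected discounted cost J_c(pi) = E_pi[C(tau)], where traj pi is
  the law of trajectories generated by policy pi.\<close>
definition Jc :: "('p \<Rightarrow> 't measure) \<Rightarrow> real \<Rightarrow> ('t \<Rightarrow> nat \<Rightarrow> real) \<Rightarrow> 'p \<Rightarrow> real" where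
  "Jc traj \<gamma> cost \<pi> = (\<integral>\<tau>. disc_return \<gamma> cost \<tau> \<partial>(traj \<pi>))"

text \<open>Empirical cost estimate at iterate k: mean of C over the N sampled trajectories
  T k 0, ..., T k (N-1) (random elements on the sample space).\<close>
definition Jhat :: "real \<Rightarrow> ('t \<Rightarrow> nat \<Rightarrow> real) \<Rightarrow> nat \<Rightarrow> (nat \<Rightarrow> nat \<Rightarrow> 'w \<Rightarrow> 't) \<Rightarrow> nat \<Rightarrow> 'w \<Rightarrow> real" where
  "Jhat \<gamma> cost N T k \<omega> = (\<Sum>i<N. disc_return \<gamma> cost (T k i \<omega>)) / real N"

definition fhat :: "real \<Rightarrow> ('t \<Rightarrow> nat \<Rightarrow> real) \<Rightarrow> nat \<Rightarrow> (nat \<Rightarrow> nat \<Rightarrow> 'w \<Rightarrow> 't)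
    \<Rightarrow> real \<Rightarrow> (nat \<Rightarrow> real) \<Rightarrow> nat \<Rightarrow> 'w \<Rightarrow> real" where
  "fhat \<gamma> cost N T \<Delta>t lam k \<omega> =
     (Jhat \<gamma> cost N T (k + 1) \<omega> - 2 * Jhat \<gamma> cost N T k \<omega> + Jhat \<gamma> cost N T (k - 1) \<omega>) / \<Delta>t ^ 2
     + lam k"

end

theory Submission
  imports Defs
begin
lemma (in prob_space) mgf_factor:
  fixes f :: "'a \<Rightarrow> real"
  assumes rv: "random_variable borel f" and AE: "AE x in M. f x \<in> {0..B}"
    and E: "expectation f = m"
  shows "(\<integral>\<^sup>+x. ennreal (exp (l * (f x - m))) \<partial>M) \<le> ennreal (exp (l\<^sup>2 * B\<^sup>2 / 8))"
proof -
  consider "l > 0" | "l = 0" | "l < 0" by linarith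
  then show ?thesis
  proof cases
    case 1
    interpret interval_bounded_random_variable M f 0 B
      by unfold_locales (use rv AE in auto)
    show ?thesis using Hoeffdings_lemma_nn_integral[OF 1] E by simp
  next
    case 2
    then show ?thesis by (simp add: emeasure_space_1)
  next
    case 3
    interpret interval_bounded_random_variable M "\<lambda>x. - f x" "-B" 0
      by unfold_locales (use rv AE in \<open>auto elim!: eventually_mono\<close>)
    have "expectation (\<lambda>x. - f x) = - m" using E by simp
    moreover have "- l > 0" using 3 by simp
    note Hoeffdings_lemma_nn_integral[OF this]
    ultimately show ?thesis by (simp add: algebra_simps)
  qed
qed

lemma (in prob_space) mgf_sum:
  fixes X :: "nat \<Rightarrow> 'a \<Rightarrow> real"
  assumes indep: "indep_vars (\<lambda>_. borel) X {..<N}"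
    and rv: "\<And>i. i < N \<Longrightarrow> random_variable borel (X i)"
    and AE: "\<And>i. i < N \<Longrightarrow> AE x in M. X i x \<in> {0..B}"
    and E: "\<And>i. i < N \<Longrightarrow> expectation (X i) = m"
  shows "(\<integral>\<^sup>+x. ennreal (exp (l * (\<Sum>i<N. (X i x - m)))) \<partial>M) \<le> ennreal (exp (l\<^sup>2 * real N * B\<^sup>2 / 8))"
proof -
  have "(\<integral>\<^sup>+x. ennreal (exp (l * (\<Sum>i<N. (X i x - m)))) \<partial>M)
      = (\<integral>\<^sup>+x. (\<Prod>i<N. ennreal (exp (l * (X i x - m)))) \<partial>M)"
    by (intro nn_integral_cong) (simp add: sum_distrib_left exp_sum prod_ennreal)
  also have "\<dots> = (\<Prod>i<N. \<integral>\<^sup>+x. ennreal (exp (l * (X i x - m))) \<partial>M)"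
    by (intro indep_vars_nn_integral indep_vars_compose2[OF indep]) auto
  also have "\<dots> \<le> (\<Prod>i<N. ennreal (exp (l\<^sup>2 * B\<^sup>2 / 8)))"
    by (intro prod_mono_ennreal mgf_factor rv AE E) auto
  also have "\<dots> = ennreal (exp (l\<^sup>2 * real N * B\<^sup>2 / 8))"
  proof -
    have "exp (l\<^sup>2 * real N * B\<^sup>2 / 8) = exp (l\<^sup>2 * B\<^sup>2 / 8) ^ N"
      by (subst exp_of_nat_mult[symmetric]) (simp add: mult_ac)
    then show ?thesis by (simp add: ennreal_power)
  qed
  finally show ?thesis .
qed

lemma exp_convex2:
  fixes s t x y :: real
  assumes "s \<ge> 0" "0 \<le> t" "t \<le> 1"
  shows "exp (s * ((1 - t) * x + t * y)) \<le> (1 - t) * exp (s * x) + t * exp (s * y)"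
  using convex_onD[OF convex_on_exp[OF assms(1)], of t x y] assms by simp

lemma exp_abs_le: fixes s x :: real assumes "s \<ge> 0" shows "exp (s * \<bar>x\<bar>) \<le> exp (s * x) + exp (- s * x)"
  using assms by (cases "x \<ge> 0") (auto simp: add_increasing2 add_increasing)

lemma jensen4:
  fixes a b c d s eps :: real
  assumes s: "s \<ge> 0" and h: "8 * eps < \<bar>a - 3 * b + 3 * c - d\<bar>"
  shows "exp (s * eps) \<le> ((exp (s * a) + exp (- s * a)) + 3 * (exp (s * b) + exp (- s * b))
           + 3 * (exp (s * c) + exp (- s * c)) + (exp (s * d) + exp (- s * d))) / 8"
proof -
  define A where "A = (\<bar>a\<bar> + 3 * \<bar>b\<bar> + 3 * \<bar>c\<bar> + \<bar>d\<bar>) / 8"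
  have tri: "\<bar>a - 3 * b + 3 * c - d\<bar> \<le> \<bar>a\<bar> + 3 * \<bar>b\<bar> + 3 * \<bar>c\<bar> + \<bar>d\<bar>"
    using abs_ge_self[of a] abs_ge_minus_self[of a] abs_ge_self[of b] abs_ge_minus_self[of b]
      abs_ge_self[of c] abs_ge_minus_self[of c] abs_ge_self[of d] abs_ge_minus_self[of d]
    by (simp add: abs_le_iff)
  have "eps \<le> A" using h tri unfolding A_def by (simp add: field_simps)
  hence "exp (s * eps) \<le> exp (s * A)" using s by (simp add: mult_left_mono)
  also have "A = (1 - 1/2) * ((1 - 3/4) * \<bar>a\<bar> + 3/4 * \<bar>b\<bar>) + 1/2 * ((1 - 1/4) * \<bar>c\<bar> + 1/4 * \<bar>d\<bar>)"
    unfolding A_def by (simp add: field_simps)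
  also have "exp (s * \<dots>) \<le> (1 - 1/2) * exp (s * ((1 - 3/4) * \<bar>a\<bar> + 3/4 * \<bar>b\<bar>))
       + 1/2 * exp (s * ((1 - 1/4) * \<bar>c\<bar> + 1/4 * \<bar>d\<bar>))"
    by (rule exp_convex2) (use s in auto)
  also have "\<dots> \<le> (1 - 1/2) * ((1 - 3/4) * exp (s * \<bar>a\<bar>) + 3/4 * exp (s * \<bar>b\<bar>))
       + 1/2 * ((1 - 1/4) * exp (s * \<bar>c\<bar>) + 1/4 * exp (s * \<bar>d\<bar>))"
    by (intro add_mono mult_left_mono exp_convex2) (use s in auto)
  also have "\<dots> = (exp (s * \<bar>a\<bar>) + 3 * exp (s * \<bar>b\<bar>) + 3 * exp (s * \<bar>c\<bar>) + exp (s * \<bar>d\<bar>)) / 8"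
    by (simp add: field_simps)
  also have "\<dots> \<le> ((exp (s * a) + exp (- s * a)) + 3 * (exp (s * b) + exp (- s * b))
           + 3 * (exp (s * c) + exp (- s * c)) + (exp (s * d) + exp (- s * d))) / 8"
    by (intro divide_right_mono add_mono mult_left_mono exp_abs_le) (use s in auto)
  finally show ?thesis .
qed

lemma det_bound:
  fixes Jh0 Jh1 Jh2 Jh3 J0 J1 J2 J3 l0 l1 lmax D eps dt :: real
  assumes dt: "dt > 0"
    and d1: "\<bar>J1 - J0\<bar> \<le> D" and d2: "\<bar>J2 - J1\<bar> \<le> D" and d3: "\<bar>J3 - J2\<bar> \<le> D"
    and l0: "0 \<le> l0" "l0 \<le> lmax" and l1: "0 \<le> l1" "l1 \<le> lmax"
    and err: "\<bar>(Jh3 - J3) - 3 * (Jh2 - J2) + 3 * (Jh1 - J1) - (Jh0 - J0)\<bar> \<le> 8 * eps"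
  shows "\<bar>((Jh3 - 2 * Jh2 + Jh1) / dt ^ 2 + l1) - ((Jh2 - 2 * Jh1 + Jh0) / dt ^ 2 + l0)\<bar> / dt
         \<le> 4 / dt ^ 3 * (D + 2 * eps) + 2 * lmax / dt"
proof -
  define c where "c = Jh3 - 3 * Jh2 + 3 * Jh1 - Jh0"
  have "c = ((Jh3 - J3) - 3 * (Jh2 - J2) + 3 * (Jh1 - J1) - (Jh0 - J0)) + (J3 - J2) - 2 * (J2 - J1) + (J1 - J0)"
    unfolding c_def by simp
  hence cb: "\<bar>c\<bar> \<le> 4 * D + 8 * eps" using err d1 d2 d3 by (smt (verit))
  have eq: "((Jh3 - 2 * Jh2 + Jh1) / dt ^ 2 + l1) - ((Jh2 - 2 * Jh1 + Jh0) / dt ^ 2 + l0) = c / dt ^ 2 + (l1 - l0)"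
    unfolding c_def using dt by (simp add: field_simps)
  have "\<bar>c / dt ^ 2 + (l1 - l0)\<bar> \<le> \<bar>c\<bar> / dt ^ 2 + lmax"
    using l0 l1 dt abs_triangle_ineq[of "c / dt ^ 2" "l1 - l0"] by (simp add: abs_divide)
  also have "\<dots> \<le> (4 * D + 8 * eps) / dt ^ 2 + lmax"
    using cb dt by (simp add: divide_right_mono)
  finally have "\<bar>c / dt ^ 2 + (l1 - l0)\<bar> / dt \<le> ((4 * D + 8 * eps) / dt ^ 2 + lmax) / dt"
    using dt by (simp add: divide_right_mono)
  also have "\<dots> = 4 / dt ^ 3 * (D + 2 * eps) + lmax / dt"
    using dt by (simp add: field_simps power3_eq_cube power2_eq_square)
  also have "\<dots> \<le> 4 / dt ^ 3 * (D + 2 * eps) + 2 * lmax / dt"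
    using dt l0 by (simp add: divide_right_mono)
  finally show ?thesis unfolding eq .
qed

lemma nn_integral_4:
  fixes f1 f2 f3 f4 :: "'a \<Rightarrow> real"
  assumes [measurable]: "f1 \<in> borel_measurable M" "f2 \<in> borel_measurable M" "f3 \<in> borel_measurable M" "f4 \<in> borel_measurable M"
    and nn: "\<And>x. f1 x \<ge> 0" "\<And>x. f2 x \<ge> 0" "\<And>x. f3 x \<ge> 0" "\<And>x. f4 x \<ge> 0"
  shows "(\<integral>\<^sup>+x. ennreal (f1 x + 3 * f2 x + 3 * f3 x + f4 x) \<partial>M)
     = (\<integral>\<^sup>+x. ennreal (f1 x) \<partial>M) + 3 * (\<integral>\<^sup>+x. ennreal (f2 x) \<partial>M) + 3 * (\<integral>\<^sup>+x. ennreal (f3 x) \<partial>M) + (\<integral>\<^sup>+x. ennreal (f4 x) \<partial>M)"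
proof -
  have "(\<integral>\<^sup>+x. ennreal (f1 x + 3 * f2 x + 3 * f3 x + f4 x) \<partial>M)
      = (\<integral>\<^sup>+x. ennreal (f1 x) + 3 * ennreal (f2 x) + 3 * ennreal (f3 x) + ennreal (f4 x) \<partial>M)"
    using nn by (intro nn_integral_cong) (simp add: ennreal_plus ennreal_mult)
  also have "\<dots> = (\<integral>\<^sup>+x. ennreal (f1 x) + 3 * ennreal (f2 x) + 3 * ennreal (f3 x) \<partial>M) + (\<integral>\<^sup>+x. ennreal (f4 x) \<partial>M)"
    by (rule nn_integral_add) measurable
  also have "(\<integral>\<^sup>+x. ennreal (f1 x) + 3 * ennreal (f2 x) + 3 * ennreal (f3 x) \<partial>M)
     = (\<integral>\<^sup>+x. ennreal (f1 x) + 3 * ennreal (f2 x) \<partial>M) + (\<integral>\<^sup>+x. 3 * ennreal (f3 x) \<partial>M)"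
    by (rule nn_integral_add) measurable
  also have "(\<integral>\<^sup>+x. ennreal (f1 x) + 3 * ennreal (f2 x) \<partial>M)
     = (\<integral>\<^sup>+x. ennreal (f1 x) \<partial>M) + (\<integral>\<^sup>+x. 3 * ennreal (f2 x) \<partial>M)"
    by (rule nn_integral_add) measurable
  also have "(\<integral>\<^sup>+x. 3 * ennreal (f2 x) \<partial>M) = 3 * (\<integral>\<^sup>+x. ennreal (f2 x) \<partial>M)"
    by (rule nn_integral_cmult) measurable
  also have "(\<integral>\<^sup>+x. 3 * ennreal (f3 x) \<partial>M) = 3 * (\<integral>\<^sup>+x. ennreal (f3 x) \<partial>M)"
    by (rule nn_integral_cmult) measurable
  finally show ?thesis .
qed
theorem lemmaC5:
  fixes M :: "'w measure" and S :: "'t measure"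
    and traj :: "'p \<Rightarrow> 't measure" and cost :: "'t \<Rightarrow> nat \<Rightarrow> real"
    and \<pi> :: "nat \<Rightarrow> 'p" and DKL :: "'p \<Rightarrow> 'p \<Rightarrow> real"
    and T :: "nat \<Rightarrow> nat \<Rightarrow> 'w \<Rightarrow> 't"
    and lam :: "nat \<Rightarrow> real"
    and \<gamma> \<Delta>t lam_max Bc \<delta> \<eta> :: real and N K :: nat
  assumes M: "prob_space M"
    and gamma: "0 < \<gamma>" "\<gamma> < 1"
    and cost_nonneg: "\<And>\<tau> t. 0 \<le> cost \<tau> t"
    and dt: "\<Delta>t > 0"
    and traj_prob: "\<And>p. prob_space (traj p)"
    and traj_sets: "\<And>p. sets (traj p) = sets S"
    and C_meas: "disc_return \<gamma> cost \<in> borel_measurable S"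
    and lam: "\<And>k. 0 \<le> lam k \<and> lam k \<le> lam_max"
    and N: "N \<ge> 1"
    and T_meas: "\<And>k i. T k i \<in> measurable M S"
    and T_distr: "\<And>k i. i < N \<Longrightarrow> distr M S (T k i) = traj (\<pi> k)"
    and T_indep: "\<And>k. prob_space.indep_vars M (\<lambda>_. S) (T k) {..<N}"
    and C_bound: "\<And>p. AE \<tau> in traj p. 0 \<le> disc_return \<gamma> cost \<tau> \<and> disc_return \<gamma> cost \<tau> \<le> Bc"
    and delta: "\<delta> \<ge> 0"
    and trust_region: "\<And>k. DKL (\<pi> k) (\<pi> (Suc k)) \<le> \<delta>"
    and drift: "\<And>k. \<bar>Jc traj \<gamma> cost (\<pi> (Suc k)) - Jc traj \<gamma> cost (\<pi> k)\<bar>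
                      \<le> 2 * Bc / (1 - \<gamma>) * sqrt (2 * \<delta>)"
    and K: "K \<ge> 2"
    and eta: "0 < \<eta>" "\<eta> < 1"
  shows "measure M {\<omega> \<in> space M.
            Max ((\<lambda>k. \<bar>fhat \<gamma> cost N T \<Delta>t lam (k + 1) \<omega> - fhat \<gamma> cost N T \<Delta>t lam k \<omega>\<bar> / \<Delta>t) ` {1..K-1})
            \<le> 4 / \<Delta>t ^ 3 * (2 * Bc / (1 - \<gamma>) * sqrt (2 * \<delta>)
                 + 2 * (Bc * sqrt (ln (2 * real K / \<eta>) / (2 * real N))))
              + 2 * lam_max / \<Delta>t}
         \<ge> 1 - \<eta>"
proof -
  interpret P: prob_space M by (rule M)
  define C where "C = disc_return \<gamma> cost"
  define J where "J j = Jc traj \<gamma> cost (\<pi> j)" for j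
  define e where "e j \<omega> = Jhat \<gamma> cost N T j \<omega> - J j" for j \<omega>
  define D where "D = 2 * Bc / (1 - \<gamma>) * sqrt (2 * \<delta>)"
  define L where "L = ln (2 * real K / \<eta>)"
  define eps where "eps = Bc * sqrt (L / (2 * real N))"
  define G where "G k = {\<omega> \<in> space M. 8 * eps < \<bar>e (k + 2) \<omega> - 3 * e (k + 1) \<omega> + 3 * e k \<omega> - e (k - 1) \<omega>\<bar>}" for k
  note C_meas[measurable] T_meas[measurable]
  have Cm[measurable]: "C \<in> borel_measurable S" unfolding C_def by (rule C_meas)
  have Jhm[measurable]: "(\<lambda>\<omega>. Jhat \<gamma> cost N T j \<omega>) \<in> borel_measurable M" for j
    unfolding Jhat_def by measurable
  have em[measurable]: "(\<lambda>\<omega>. e j \<omega>) \<in> borel_measurable M" for j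
    unfolding e_def by measurable
  have Gm: "G k \<in> sets M" for k
    unfolding G_def by measurable
  have Bc0: "0 \<le> Bc"
  proof -
    interpret Q: prob_space "traj (\<pi> 0)" by (rule traj_prob)
    have "AE \<tau> in traj (\<pi> 0). 0 \<le> Bc"
      by (rule eventually_mono[OF C_bound]) auto
    thus ?thesis by simp
  qed
  have AEY: "AE \<omega> in M. C (T j i \<omega>) \<in> {0..Bc}" if i: "i < N" for j i
  proof -
    have "AE \<tau> in distr M S (T j i). C \<tau> \<in> {0..Bc}"
      unfolding T_distr[OF i] using C_bound[of "\<pi> j"] by (auto simp: C_def elim!: eventually_mono)
    thus ?thesis by (subst (asm) AE_distr_iff) auto
  qed
  have EY: "P.expectation (\<lambda>\<omega>. C (T j i \<omega>)) = J j" if i: "i < N" for j i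
  proof -
    have "J j = integral\<^sup>L (distr M S (T j i)) C"
      unfolding J_def Jc_def T_distr[OF i] C_def ..
    also have "\<dots> = P.expectation (\<lambda>\<omega>. C (T j i \<omega>))"
      by (rule integral_distr) measurable
    finally show ?thesis by simp
  qed
  have indY: "P.indep_vars (\<lambda>_. borel) (\<lambda>i \<omega>. C (T j i \<omega>)) {..<N}" for j
    by (rule P.indep_vars_compose2[OF T_indep]) measurable
  have mgf: "(\<integral>\<^sup>+\<omega>. ennreal (exp (l * e j \<omega>)) \<partial>M) \<le> ennreal (exp (l\<^sup>2 * Bc\<^sup>2 / (8 * real N)))" for j l
  proof -
    have eq: "l * e j \<omega> = (l / real N) * (\<Sum>i<N. (C (T j i \<omega>) - J j))" for \<omega>
      using N by (simp add: e_def Jhat_def C_def sum_subtractf field_simps)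
    have "(\<integral>\<^sup>+\<omega>. ennreal (exp ((l / real N) * (\<Sum>i<N. (C (T j i \<omega>) - J j)))) \<partial>M)
        \<le> ennreal (exp ((l / real N)\<^sup>2 * real N * Bc\<^sup>2 / 8))"
      by (rule P.mgf_sum[OF indY _ AEY EY]) measurable
    also have "(l / real N)\<^sup>2 * real N * Bc\<^sup>2 / 8 = l\<^sup>2 * Bc\<^sup>2 / (8 * real N)"
      using N by (simp add: field_simps power2_eq_square)
    finally show ?thesis unfolding eq .
  qed
  have Lpos: "L > 0"
  proof -
    have "1 < 2 * real K / \<eta>" using K eta by (simp add: field_simps)
    thus ?thesis unfolding L_def by simp
  qed
  have expL: "exp (- L) = \<eta> / (2 * real K)"
  proof -
    have "0 < 2 * real K / \<eta>" using K eta by simp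
    hence "exp L = 2 * real K / \<eta>" unfolding L_def by simp
    thus ?thesis by (simp add: exp_minus)
  qed
  have Gbound: "measure M (G k) \<le> \<eta> / real K" for k
  proof (cases "Bc = 0")
    case False
    hence Bcp: "Bc > 0" using Bc0 by simp
    define s where "s = 4 * real N * eps / Bc\<^sup>2"
    define Q where "Q = exp (s\<^sup>2 * Bc\<^sup>2 / (8 * real N))"
    define g where "g j \<omega> = exp (s * e j \<omega>) + exp (- s * e j \<omega>)" for j \<omega>
    have eps0: "eps \<ge> 0" unfolding eps_def using Bc0 Lpos N by simp
    have s0: "s \<ge> 0" unfolding s_def using eps0 by simp
    have gm[measurable]: "g j \<in> borel_measurable M" for j unfolding g_def by measurable
    have g0: "g j \<omega> \<ge> 0" for j \<omega> unfolding g_def by (simp add: add_nonneg_nonneg)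
    have gint: "(\<integral>\<^sup>+\<omega>. ennreal (g j \<omega>) \<partial>M) \<le> 2 * ennreal Q" for j
    proof -
      have "(\<integral>\<^sup>+\<omega>. ennreal (g j \<omega>) \<partial>M) = (\<integral>\<^sup>+\<omega>. ennreal (exp (s * e j \<omega>)) + ennreal (exp (- s * e j \<omega>)) \<partial>M)"
        unfolding g_def by (intro nn_integral_cong) (simp add: ennreal_plus)
      also have "\<dots> = (\<integral>\<^sup>+\<omega>. ennreal (exp (s * e j \<omega>)) \<partial>M) + (\<integral>\<^sup>+\<omega>. ennreal (exp (- s * e j \<omega>)) \<partial>M)"
        by (rule nn_integral_add) measurable
      also have "\<dots> \<le> ennreal Q + ennreal Q"
        using mgf[of s j] mgf[of "- s" j] unfolding Q_def by (intro add_mono) auto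
      finally show ?thesis by (simp add: mult_2)
    qed
    have pw: "ennreal (8 * exp (s * eps)) * indicator (G k) \<omega>
        \<le> ennreal (g (k + 2) \<omega> + 3 * g (k + 1) \<omega> + 3 * g k \<omega> + g (k - 1) \<omega>)" for \<omega>
    proof (cases "\<omega> \<in> G k")
      case True
      hence "8 * eps < \<bar>e (k + 2) \<omega> - 3 * e (k + 1) \<omega> + 3 * e k \<omega> - e (k - 1) \<omega>\<bar>"
        unfolding G_def by auto
      from jensen4[OF s0 this]
      have "8 * exp (s * eps) \<le> g (k + 2) \<omega> + 3 * g (k + 1) \<omega> + 3 * g k \<omega> + g (k - 1) \<omega>"
        unfolding g_def by simp
      thus ?thesis using True by (simp add: ennreal_leI)
    qed simp
    have "ennreal (8 * exp (s * eps)) * emeasure M (G k)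
        = (\<integral>\<^sup>+\<omega>. ennreal (8 * exp (s * eps)) * indicator (G k) \<omega> \<partial>M)"
      using Gm by (simp add: nn_integral_cmult_indicator)
    also have "\<dots> \<le> (\<integral>\<^sup>+\<omega>. ennreal (g (k + 2) \<omega> + 3 * g (k + 1) \<omega> + 3 * g k \<omega> + g (k - 1) \<omega>) \<partial>M)"
      by (intro nn_integral_mono pw)
    also have "\<dots> = (\<integral>\<^sup>+\<omega>. ennreal (g (k + 2) \<omega>) \<partial>M) + 3 * (\<integral>\<^sup>+\<omega>. ennreal (g (k + 1) \<omega>) \<partial>M)
        + 3 * (\<integral>\<^sup>+\<omega>. ennreal (g k \<omega>) \<partial>M) + (\<integral>\<^sup>+\<omega>. ennreal (g (k - 1) \<omega>) \<partial>M)"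
      by (rule nn_integral_4) (auto intro: g0)
    also have "\<dots> \<le> 2 * ennreal Q + 3 * (2 * ennreal Q) + 3 * (2 * ennreal Q) + 2 * ennreal Q"
      by (intro add_mono mult_left_mono gint) auto
    also have "\<dots> = (2 + 3 * 2 + 3 * 2 + 2) * ennreal Q"
      by (simp only: distrib_right mult.assoc)
    also have "\<dots> = ennreal (16 * Q)"
      unfolding Q_def by (simp add: ennreal_mult)
    finally have "ennreal (8 * exp (s * eps) * measure M (G k)) \<le> ennreal (16 * Q)"
      by (simp add: P.emeasure_eq_measure ennreal_mult)
    hence le: "8 * exp (s * eps) * measure M (G k) \<le> 16 * Q"
      unfolding Q_def by (subst (asm) ennreal_le_iff) auto
    have "measure M (G k) \<le> 2 * Q / exp (s * eps)"
      using le by (simp add: field_simps)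
    also have "2 * Q / exp (s * eps) = 2 * exp (s\<^sup>2 * Bc\<^sup>2 / (8 * real N) - s * eps)"
      unfolding Q_def by (simp add: exp_diff)
    also have "s\<^sup>2 * Bc\<^sup>2 / (8 * real N) - s * eps = - (2 * real N * eps\<^sup>2 / Bc\<^sup>2)"
      unfolding s_def using Bcp N by (simp add: field_simps power2_eq_square)
    also have "2 * real N * eps\<^sup>2 / Bc\<^sup>2 = L"
      unfolding eps_def using Bcp N Lpos by (simp add: power_mult_distrib field_simps)
    also have "2 * exp (- L) = \<eta> / real K"
      unfolding expL by simp
    finally show ?thesis .
  next
    case True
    have eps0: "eps = 0" unfolding eps_def True by simp
    have ez: "AE \<omega> in M. e j \<omega> = 0" for j
    proof -
      have "AE \<tau> in traj (\<pi> j). disc_return \<gamma> cost \<tau> = 0"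
        by (rule eventually_mono[OF C_bound[of "\<pi> j"]]) (use True in auto)
      hence J0: "J j = 0" unfolding J_def Jc_def by (rule integral_eq_zero_AE)
      have "AE \<omega> in M. \<forall>i\<in>{..<N}. C (T j i \<omega>) = 0"
        by (rule AE_finite_allI) (use AEY True in \<open>auto elim!: eventually_mono\<close>)
      thus ?thesis
        by (rule eventually_mono) (simp add: e_def Jhat_def J0 C_def)
    qed
    have "AE \<omega> in M. \<omega> \<notin> G k"
      using ez[of "k + 2"] ez[of "k + 1"] ez[of k] ez[of "k - 1"]
      by eventually_elim (simp add: G_def eps0)
    hence "emeasure M (G k) = 0"
      by (subst (asm) AE_iff_measurable[OF Gm]) (use sets.sets_into_space[OF Gm] in auto)
    hence "measure M (G k) = 0" by (simp add: P.emeasure_eq_measure)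
    thus ?thesis using eta by simp
  qed
  define U where "U = (\<Union>k\<in>{1..K-1}. G k)"
  have Um: "U \<in> sets M" unfolding U_def using Gm by auto
  have "measure M U \<le> (\<Sum>k\<in>{1..K-1}. measure M (G k))"
    unfolding U_def by (rule P.finite_measure_subadditive_finite) (use Gm in auto)
  also have "\<dots> \<le> (\<Sum>k\<in>{1..K-1}. \<eta> / real K)"
    by (rule sum_mono) (rule Gbound)
  also have "\<dots> = real (K - 1) * \<eta> / real K" by simp
  also have "\<dots> \<le> \<eta>"
    using K eta by (simp add: field_simps)
  finally have MU: "measure M U \<le> \<eta>" .
  define h where "h k \<omega> = \<bar>fhat \<gamma> cost N T \<Delta>t lam (k + 1) \<omega> - fhat \<gamma> cost N T \<Delta>t lam k \<omega>\<bar> / \<Delta>t" for k \<omega>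
  define bnd where "bnd = 4 / \<Delta>t ^ 3 * (2 * Bc / (1 - \<gamma>) * sqrt (2 * \<delta>)
                 + 2 * (Bc * sqrt (ln (2 * real K / \<eta>) / (2 * real N))))
              + 2 * lam_max / \<Delta>t"
  have bnd_eq: "bnd = 4 / \<Delta>t ^ 3 * (D + 2 * eps) + 2 * lam_max / \<Delta>t"
    unfolding bnd_def D_def eps_def L_def ..
  have ne: "{1..K-1} \<noteq> {}" using K by simp
  define S0 where "S0 = {\<omega> \<in> space M. Max ((\<lambda>k. h k \<omega>) ` {1..K-1}) \<le> bnd}"
  have S0_eq: "S0 = {\<omega> \<in> space M. \<forall>k\<in>{1..K-1}. h k \<omega> \<le> bnd}"
    unfolding S0_def using ne by (simp add: Max_le_iff)
  have hm[measurable]: "(\<lambda>\<omega>. h k \<omega>) \<in> borel_measurable M" for k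
    unfolding h_def fhat_def Jhat_def by measurable
  have S0m: "S0 \<in> sets M"
    unfolding S0_eq by measurable
  have sub: "space M - U \<subseteq> S0"
  proof
    fix \<omega> assume \<omega>: "\<omega> \<in> space M - U"
    have "h k \<omega> \<le> bnd" if k: "k \<in> {1..K-1}" for k
    proof -
      have k1: "k \<ge> 1" using k by simp
      have "\<omega> \<notin> G k" using \<omega> k unfolding U_def by auto
      hence err: "\<bar>e (k + 2) \<omega> - 3 * e (k + 1) \<omega> + 3 * e k \<omega> - e (k - 1) \<omega>\<bar> \<le> 8 * eps"
        using \<omega> unfolding G_def by auto
      have d1: "\<bar>J k - J (k - 1)\<bar> \<le> D"
        using drift[of "k - 1"] k1 unfolding J_def D_def by simp
      have d2: "\<bar>J (k + 1) - J k\<bar> \<le> D"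
        using drift[of k] unfolding J_def D_def by simp
      have d3: "\<bar>J (k + 2) - J (k + 1)\<bar> \<le> D"
        using drift[of "k + 1"] unfolding J_def D_def by (simp add: numeral_2_eq_2)
      have f1: "fhat \<gamma> cost N T \<Delta>t lam (k + 1) \<omega> =
          (Jhat \<gamma> cost N T (k + 2) \<omega> - 2 * Jhat \<gamma> cost N T (k + 1) \<omega> + Jhat \<gamma> cost N T k \<omega>) / \<Delta>t ^ 2 + lam (k + 1)"
        unfolding fhat_def by (simp add: numeral_2_eq_2)
      have f0: "fhat \<gamma> cost N T \<Delta>t lam k \<omega> =
          (Jhat \<gamma> cost N T (k + 1) \<omega> - 2 * Jhat \<gamma> cost N T k \<omega> + Jhat \<gamma> cost N T (k - 1) \<omega>) / \<Delta>t ^ 2 + lam k"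
        unfolding fhat_def ..
      have "h k \<omega> \<le> 4 / \<Delta>t ^ 3 * (D + 2 * eps) + 2 * lam_max / \<Delta>t"
        unfolding h_def f1 f0
        by (rule det_bound[OF dt d1 d2 d3]) (use lam err in \<open>auto simp: e_def\<close>)
      thus ?thesis unfolding bnd_eq .
    qed
    thus "\<omega> \<in> S0" unfolding S0_eq using \<omega> by auto
  qed
  have "1 - \<eta> \<le> 1 - measure M U" using MU by simp
  also have "\<dots> = measure M (space M - U)" using Um by (simp add: P.prob_compl)
  also have "\<dots> \<le> measure M S0" by (rule P.finite_measure_mono[OF sub S0m])
  finally show ?thesis unfolding S0_def h_def bnd_def .
qed

end
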